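(* Let $(X,+,d)$ be an Abelian metric group with translation-invariant metric $d$ such that every non-empty open ball in $X$ contains infinitely many elements. Then (i) the family $\{A\subset X:\ A\text{ is finite and } S(A)\neq\{0\}\}$ is dense in $K(X)$; (ii) the family $NT(X)$ is dense in $K(X)$.
   Context: $d$ satisfies $d(x,y)=d(x+z,y+z)$ for all $x,y,z\in X$; $0$ is the neutral element. $K(X)$ is the family of non-empty compact subsets of $X$ with the Pompeiu–Hausdorff metric $d_H(A,B)=\max\{\sup_{a\in A}d(a,B),\sup_{b\in B}d(A,b)\}$. The spectre of $A\subset X$ is $S(A):=\{z\in X:\ \forall_{a\in A}\ (a+z\in A \text{ or } a-z\in A)\}$. A set $A\subset X$ is a net-set if it is finite, has at least three elements, and for every pair of distinct two-element subsets $\{z,t\}\neq\{u,v\}$ of $A$ we have $\{z-t,t-z\}\cap\{v-u,u-v\}=\emptyset$; $NT(X)$ is the family of all net-sets. *)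

theory Defs
  imports "HOL-Analysis.Analysis"
begin

text \<open>Pompeiu--Hausdorff distance, as in the paper (used on non-empty compact sets,
  where both suprema are finite); d(a,B) is the library notion infdist a B.\<close>
definition hausdist :: "'a::metric_space set \<Rightarrow> 'a set \<Rightarrow> real" where
  "hausdist A B = max (SUP a\<in>A. infdist a B) (SUP b\<in>B. infdist b A)"

definition spectre :: "'a::ab_group_add set \<Rightarrow> 'a set" where
  "spectre A = {z. \<forall>a\<in>A. a + z \<in> A \<or> a - z \<in> A}"

definition net_set :: "'a::ab_group_add set \<Rightarrow> bool" where
  "net_set A \<longleftrightarrow> finite A \<and> card A \<ge> 3 \<and>
     (\<forall>z\<in>A. \<forall>t\<in>A. \<forall>u\<in>A. \<forall>v\<in>A. z \<noteq> t \<longrightarrow> u \<noteq> v \<longrightarrow> {z, t} \<noteq> {u, v} \<longrightarrow>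
        {z - t, t - z} \<inter> {v - u, u - v} = {})"

end

theory Submission
  imports Defs
begin

definition netp :: "'a::ab_group_add set \<Rightarrow> bool" where
  "netp B \<longleftrightarrow> (\<forall>z\<in>B. \<forall>t\<in>B. \<forall>u\<in>B. \<forall>v\<in>B. z \<noteq> t \<longrightarrow> u \<noteq> v \<longrightarrow> {z, t} \<noteq> {u, v} \<longrightarrow> z - t \<noteq> u - v)"

lemma netp_empty: "netp {}" by (simp add: netp_def)

lemma netpD:
  assumes "netp B" "z \<in> B" "t \<in> B" "u \<in> B" "v \<in> B" "z \<noteq> t" "u \<noteq> v" "{z, t} \<noteq> {u, v}"
  shows "z - t \<noteq> u - v"
  by (rule assms(1)[unfolded netp_def, rule_format, OF assms(2-8)])

lemma netp_insert:
  fixes x :: "'a::ab_group_add"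
  assumes n: "netp B" and xB: "x \<notin> B"
    and c1: "\<And>b u v. b \<in> B \<Longrightarrow> u \<in> B \<Longrightarrow> v \<in> B \<Longrightarrow> x \<noteq> b + u - v"
    and c2: "\<And>b b'. b \<in> B \<Longrightarrow> b' \<in> B \<Longrightarrow> b \<noteq> b' \<Longrightarrow> x + x \<noteq> b + b'"
  shows "netp (insert x B)"
  unfolding netp_def
proof (intro ballI impI)
  fix z t u v assume z: "z \<in> insert x B" and t: "t \<in> insert x B" and u: "u \<in> insert x B"
    and v: "v \<in> insert x B" and zt: "z \<noteq> t" and uv: "u \<noteq> v" and ne: "{z, t} \<noteq> {u, v}"
  show "z - t \<noteq> u - v"
  proof
    assume eq: "z - t = u - v"
    have ne': "\<not> (z = u \<and> t = v)" "\<not> (z = v \<and> t = u)" using ne by auto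
    show False
    proof (cases "z = x")
      case True
      then have tB: "t \<in> B" using t zt by auto
      show ?thesis
      proof (cases "u = x")
        case True
        then have "t = v" using eq \<open>z = x\<close> by (simp add: algebra_simps)
        then show ?thesis using ne' True \<open>z = x\<close> by auto
      next
        case False
        then have uB: "u \<in> B" using u by auto
        show ?thesis
        proof (cases "v = x")
          case True
          then have "x + x = u + t" using eq \<open>z = x\<close> by (simp add: algebra_simps)
          moreover have "u \<noteq> t" using ne' True \<open>z = x\<close> by auto
          ultimately show ?thesis using c2[OF uB tB] by auto
        next
          case False
          then have vB: "v \<in> B" using v by auto
          have "x = t + u - v" using eq \<open>z = x\<close> by (simp add: algebra_simps)
          then show ?thesis using c1[OF tB uB vB] by auto
        qed
      qed
    next
      case zx: False
      then have zB: "z \<in> B" using z by auto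
      show ?thesis
      proof (cases "t = x")
        case True
        show ?thesis
        proof (cases "u = x")
          case True
          then have vB: "v \<in> B" using v uv by auto
          have "x + x = z + v" using eq \<open>t = x\<close> True by (simp add: algebra_simps)
          moreover have "z \<noteq> v" using ne' True \<open>t = x\<close> by auto
          ultimately show ?thesis using c2[OF zB vB] by auto
        next
          case False
          then have uB: "u \<in> B" using u by auto
          show ?thesis
          proof (cases "v = x")
            case True
            then have "z = u" using eq \<open>t = x\<close> by (simp add: algebra_simps)
            then show ?thesis using ne' True \<open>t = x\<close> by auto
          next
            case False
            then have vB: "v \<in> B" using v by auto
            have "x = z + v - u" using eq \<open>t = x\<close> by (simp add: algebra_simps)
            then show ?thesis using c1[OF zB vB uB] by auto
          qed
        qed
      next
        case tx: False
        then have tB: "t \<in> B" using t by auto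
        show ?thesis
        proof (cases "u = x")
          case True
          then have vB: "v \<in> B" using v uv by auto
          have "x = v + z - t" using eq True by (simp add: algebra_simps)
          then show ?thesis using c1[OF vB zB tB] by auto
        next
          case False
          then have uB: "u \<in> B" using u by auto
          show ?thesis
          proof (cases "v = x")
            case True
            have "x = u + t - z" using eq True by (simp add: algebra_simps)
            then show ?thesis using c1[OF uB tB zB] by auto
          next
            case False
            then have vB: "v \<in> B" using v by auto
            show ?thesis using netpD[OF n zB tB uB vB zt uv ne] eq by blast
          qed
        qed
      qed
    qed
  qed
qed

lemma netp_imp_net_set:
  assumes "netp B" "finite B" "card B \<ge> 3"
  shows "net_set B"
  unfolding net_set_def
proof (intro conjI ballI impI)
  show "finite B" "card B \<ge> 3" using assms by auto
next
  fix z t u v assume h: "z \<in> B" "t \<in> B" "u \<in> B" "v \<in> B" "z \<noteq> t" "u \<noteq> v" "{z, t} \<noteq> {u, v}"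
  have a: "z - t \<noteq> u - v" by (rule netpD[OF assms(1) h])
  have "{z, t} \<noteq> {v, u}" using h(7) by (metis insert_commute)
  then have b: "z - t \<noteq> v - u" by (rule netpD[OF assms(1) h(1,2,4,3,5) h(6)[symmetric]])
  have c: "t - z \<noteq> v - u" using a by (metis minus_diff_eq)
  have d: "t - z \<noteq> u - v" using b by (metis minus_diff_eq)
  show "{z - t, t - z} \<inter> {v - u, u - v} = {}" using a b c d by auto
qed

lemma hausdist_le:
  fixes A K :: "'a::metric_space set"
  assumes "A \<noteq> {}" "K \<noteq> {}"
    and "\<And>a. a \<in> A \<Longrightarrow> infdist a K \<le> r" and "\<And>k. k \<in> K \<Longrightarrow> infdist k A \<le> r"
  shows "hausdist A K \<le> r"
proof -
  have 1: "(SUP a\<in>A. infdist a K) \<le> r" using assms(1,3) by (rule cSUP_least)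
  have 2: "(SUP k\<in>K. infdist k A) \<le> r" using assms(2,4) by (rule cSUP_least)
  show ?thesis unfolding hausdist_def using 1 2 by (rule max.boundedI)
qed

lemma avoid_finite:
  fixes p :: "'a::metric_space"
  assumes "infinite (ball p r)" "finite E"
  obtains x where "x \<in> ball p r" "x \<notin> E"
proof -
  have "\<not> ball p r \<subseteq> E"
  proof
    assume "ball p r \<subseteq> E"
    then have "finite (ball p r)" using assms(2) by (rule finite_subset)
    then show False using assms(1) by simp
  qed
  then show ?thesis using that by blast
qed

lemma build:
  fixes cs :: "'a::{ab_group_add, metric_space} list"
  assumes inv: "\<And>x y z :: 'a. dist x y = dist (x + z) (y + z)"
    and balls: "\<And>(x::'a) r. r > 0 \<Longrightarrow> infinite (ball x r)"
    and Q: "set cs \<subseteq> Q" "finite Q" and d: "\<delta> > 0"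
  shows "\<exists>B. finite B \<and> card B = length cs \<and> (\<forall>c\<in>set cs. \<exists>b\<in>B. dist b c < \<delta>)
     \<and> (\<forall>b\<in>B. \<exists>c\<in>set cs. dist b c < \<delta>) \<and> netp B
     \<and> (\<forall>b\<in>B. \<forall>b'\<in>B. b \<noteq> b' \<longrightarrow> b + b' \<notin> (\<lambda>q. q + q) ` Q)"
  using Q(1)
proof (induction cs)
  case Nil
  show ?case by (intro exI[of _ "{}"]) (simp add: netp_empty)
next
  case (Cons p cs)
  then obtain B where B: "finite B" "card B = length cs" "\<forall>c\<in>set cs. \<exists>b\<in>B. dist b c < \<delta>"
    "\<forall>b\<in>B. \<exists>c\<in>set cs. dist b c < \<delta>" "netp B"
    "\<forall>b\<in>B. \<forall>b'\<in>B. b \<noteq> b' \<longrightarrow> b + b' \<notin> (\<lambda>q. q + q) ` Q" by auto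
  have pQ: "p \<in> Q" using Cons.prems by auto
  define C where "C = (\<lambda>(b, b'). b + b') ` {(b, b'). b \<in> B \<and> b' \<in> B \<and> b \<noteq> b'}"
  have fC: "finite C" unfolding C_def
    by (rule finite_imageI, rule finite_subset[of _ "B \<times> B"]) (use B(1) in auto)
  have pC: "p + p \<notin> C" using B(6) pQ unfolding C_def by force
  have "open (- C)" using fC by (simp add: finite_imp_closed open_Compl)
  then obtain r where r: "r > 0" "ball (p + p) r \<subseteq> - C"
    using pC open_contains_ball by blast
  define E where "E = (\<lambda>(b, u, v). b + u - v) ` (B \<times> B \<times> B) \<union> (\<lambda>(q, b). q + q - b) ` (Q \<times> B)"
  have fE: "finite E" unfolding E_def using B(1) Q(2) by auto
  define \<rho> where "\<rho> = min \<delta> (r / 2)"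
  have rho: "\<rho> > 0" using d r unfolding \<rho>_def by auto
  obtain x where x: "x \<in> ball p \<rho>" "x \<notin> E" using avoid_finite[OF balls[OF rho] fE] by blast
  have dxp: "dist x p < \<rho>" using x(1) by (simp add: dist_commute)
  have xB: "x \<notin> B"
  proof
    assume "x \<in> B"
    then have "x \<in> E" unfolding E_def by (auto intro!: image_eqI[of _ _ "(x, x, x)"])
    then show False using x by auto
  qed
  have c1: "x \<noteq> b + u - v" if "b \<in> B" "u \<in> B" "v \<in> B" for b u v
  proof
    assume "x = b + u - v"
    then have "x \<in> E" unfolding E_def using that by (auto intro!: image_eqI[of _ _ "(b, u, v)"])
    then show False using x by auto
  qed
  have dd: "dist (x + x) (p + p) < r"
  proof -
    have "dist (x + x) (p + p) \<le> dist (x + x) (p + x) + dist (p + x) (p + p)" by (rule dist_triangle)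
    also have "dist (x + x) (p + x) = dist x p" using inv[of x p x] by simp
    also have "dist (p + x) (p + p) = dist x p" using inv[of x p p] by (simp add: add.commute)
    finally show ?thesis using dxp unfolding \<rho>_def by auto
  qed
  have c2: "x + x \<noteq> b + b'" if "b \<in> B" "b' \<in> B" "b \<noteq> b'" for b b'
  proof
    assume "x + x = b + b'"
    then have "x + x \<in> C" unfolding C_def using that by force
    moreover have "x + x \<in> ball (p + p) r" using dd by (simp add: dist_commute)
    ultimately show False using r by auto
  qed
  have c3: "x + b \<notin> (\<lambda>q. q + q) ` Q" if "b \<in> B" for b
  proof
    assume "x + b \<in> (\<lambda>q. q + q) ` Q"
    then obtain q where q: "q \<in> Q" "x + b = q + q" by auto
    then have "x = q + q - b" by (simp add: algebra_simps)
    then have "x \<in> E" unfolding E_def using that q(1) by (auto intro!: image_eqI[of _ _ "(q, b)"])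
    then show False using x by auto
  qed
  show ?case
  proof (intro exI[of _ "insert x B"] conjI)
    show "finite (insert x B)" using B(1) by simp
    show "card (insert x B) = length (p # cs)" using B(1,2) xB by simp
    show "\<forall>c\<in>set (p # cs). \<exists>b\<in>insert x B. dist b c < \<delta>"
      using B(3) dxp unfolding \<rho>_def by auto
    show "\<forall>b\<in>insert x B. \<exists>c\<in>set (p # cs). dist b c < \<delta>"
      using B(4) dxp unfolding \<rho>_def by auto
    show "netp (insert x B)" using netp_insert[OF B(5) xB c1 c2] by blast
    show "\<forall>b\<in>insert x B. \<forall>b'\<in>insert x B. b \<noteq> b' \<longrightarrow> b + b' \<notin> (\<lambda>q. q + q) ` Q"
      using B(6) c3 by (auto simp: add.commute)
  qed
qed

theorem lemma3p6:
  fixes dummy :: "'a::{ab_group_add, metric_space}"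
  assumes inv: "\<And>x y z :: 'a. dist x y = dist (x + z) (y + z)"
    and balls: "\<And>(x::'a) r. r > 0 \<Longrightarrow> infinite (ball x r)"
  shows "(\<forall>K::'a set. compact K \<and> K \<noteq> {} \<longrightarrow> (\<forall>\<epsilon>>0. \<exists>A. finite A \<and> A \<noteq> {} \<and>
            spectre A \<noteq> {0} \<and> hausdist A K < \<epsilon>))
       \<and> (\<forall>K::'a set. compact K \<and> K \<noteq> {} \<longrightarrow> (\<forall>\<epsilon>>0. \<exists>A. net_set A \<and> hausdist A K < \<epsilon>))"
proof (intro conjI allI impI)
  fix K :: "'a set" and \<epsilon> :: real
  assume K: "compact K \<and> K \<noteq> {}" and e: "\<epsilon> > 0"
  have e3: "\<epsilon> / 3 > 0" using e by simp
  obtain F where F: "finite F" "F \<subseteq> K" "K \<subseteq> (\<Union>x\<in>F. ball x (\<epsilon> / 3))"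
  proof -
    have "seq_compact K" using K compact_imp_seq_compact by blast
    from seq_compact_imp_totally_bounded[OF this] e3 show ?thesis using that by blast
  qed
  obtain p where pK: "p \<in> K" using K by auto
  {
    obtain z where z: "z \<in> ball (0::'a) (\<epsilon> / 3)" "z \<notin> {0}"
      using avoid_finite[OF balls[OF e3], of "{0}"] by blast
    have dz: "dist (f + z) f < \<epsilon> / 3" for f
      using inv[of z 0 f] z(1) by (simp add: dist_commute add.commute)
    define A where "A = F \<union> (\<lambda>f. f + z) ` F"
    have FA: "F \<subseteq> A" unfolding A_def by auto
    have Fne: "F \<noteq> {}" using F(3) pK by auto
    have "z \<in> spectre A" unfolding spectre_def A_def by auto
    then have sp: "spectre A \<noteq> {0}" using z(2) by auto
    have "hausdist A K \<le> \<epsilon> / 3"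
    proof (rule hausdist_le)
      show "A \<noteq> {}" using Fne FA by auto
      show "K \<noteq> {}" using K by auto
      fix a assume "a \<in> A"
      then consider "a \<in> F" | f where "f \<in> F" "a = f + z" unfolding A_def by auto
      then show "infdist a K \<le> \<epsilon> / 3"
      proof cases
        case 1 then show ?thesis using F(2) e3 by (simp add: infdist_zero less_imp_le subsetD)
      next
        case 2
        then have "infdist a K \<le> dist a f" using F(2) by (intro infdist_le) auto
        then show ?thesis using dz[of f] 2 by simp
      qed
    next
      fix k assume "k \<in> K"
      then obtain f where f: "f \<in> F" "dist f k < \<epsilon> / 3" using F(3) by auto
      then have "infdist k A \<le> dist k f" using FA by (intro infdist_le) auto
      then show "infdist k A \<le> \<epsilon> / 3" using f by (simp add: dist_commute)
    qed
    then have "hausdist A K < \<epsilon>" using e by simp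
    moreover have "finite A" using F(1) unfolding A_def by simp
    ultimately show "\<exists>A. finite A \<and> A \<noteq> {} \<and> spectre A \<noteq> {0} \<and> hausdist A K < \<epsilon>"
      using sp Fne FA by blast
  }
next
  fix K :: "'a set" and \<epsilon> :: real
  assume K: "compact K \<and> K \<noteq> {}" and e: "\<epsilon> > 0"
  have e3: "\<epsilon> / 3 > 0" using e by simp
  obtain F where F: "finite F" "F \<subseteq> K" "K \<subseteq> (\<Union>x\<in>F. ball x (\<epsilon> / 3))"
  proof -
    have "seq_compact K" using K compact_imp_seq_compact by blast
    from seq_compact_imp_totally_bounded[OF this] e3 show ?thesis using that by blast
  qed
  obtain p where pK: "p \<in> K" using K by auto
  obtain xs where xs: "set xs = F" using finite_list[OF F(1)] by blast
  define cs where "cs = xs @ [p, p, p]"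
  have scs: "set cs \<subseteq> K" using xs F(2) pK unfolding cs_def by auto
  have lcs: "length cs \<ge> 3" unfolding cs_def by simp
  obtain B where B: "finite B" "card B = length cs" "\<forall>c\<in>set cs. \<exists>b\<in>B. dist b c < \<epsilon> / 3"
     "\<forall>b\<in>B. \<exists>c\<in>set cs. dist b c < \<epsilon> / 3" "netp B"
    using build[OF inv balls order_refl[of "set cs"] finite_set e3] by blast
  have nB: "net_set B" using netp_imp_net_set[OF B(5) B(1)] B(2) lcs by simp
  have "hausdist B K \<le> 2 * \<epsilon> / 3"
  proof (rule hausdist_le)
    show "B \<noteq> {}" using B(2) lcs by auto
    show "K \<noteq> {}" using K by auto
    fix b assume "b \<in> B"
    then obtain c where c: "c \<in> set cs" "dist b c < \<epsilon> / 3" using B(4) by auto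
    have "infdist b K \<le> dist b c" using c scs by (intro infdist_le) auto
    then show "infdist b K \<le> 2 * \<epsilon> / 3" using c e by simp
  next
    fix k assume "k \<in> K"
    then obtain f where f: "f \<in> F" "dist f k < \<epsilon> / 3" using F(3) by auto
    then have "f \<in> set cs" using xs unfolding cs_def by auto
    then obtain b where b: "b \<in> B" "dist b f < \<epsilon> / 3" using B(3) by auto
    have "infdist k B \<le> dist k b" using b by (intro infdist_le) auto
    also have "\<dots> \<le> dist k f + dist f b" by (rule dist_triangle)
    finally show "infdist k B \<le> 2 * \<epsilon> / 3" using f b by (simp add: dist_commute)
  qed
  then have "hausdist B K < \<epsilon>" using e by simp
  then show "\<exists>A. net_set A \<and> hausdist A K < \<epsilon>" using nB by blast
qed

end
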